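(* Let $X$ and $Y$ be real Banach spaces and $\mathcal{D}$ a closed subspace of $F_Y(X)$. Then $L(F_Y(X)/\mathcal{D},Y)$ is linearly isometrically isomorphic to ${}^{\diamondsuit}\mathcal{D}$, via $f\mapsto(\gamma+\mathcal{D}\mapsto\gamma(f))$ for $f\in{}^{\diamondsuit}\mathcal{D}$.
   Context: $Lip_0(X,Y)$ is the Banach space of Lipschitz maps $f:X\to Y$ with $f(0)=0$ and norm $Lip(f)=\sup_{x\neq y}\|f(x)-f(y)\|/\|x-y\|$. For $x\in X$, $\delta_x^Y\in L(Lip_0(X,Y),Y)$ is evaluation $\delta_x^Y(f)=f(x)$. $F_Y(X)$ is the norm-closed linear span of $\{\delta_x^Y:x\in X\}$ in $L(Lip_0(X,Y),Y)$. For $\mathcal{D}\subset F_Y(X)$, ${}^{\diamondsuit}\mathcal{D}=\{f\in Lip_0(X,Y):\gamma(f)=0\ \forall\gamma\in\mathcal{D}\}$, with the norm $Lip(\cdot)$. $F_Y(X)/\mathcal{D}$ carries the quotient norm. *)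

theory Defs
  imports "HOL-Analysis.Analysis"
begin

definition Lip0 :: "('a::real_normed_vector \<Rightarrow> 'b::real_normed_vector) set" where
  "Lip0 = {f. f 0 = 0 \<and> (\<exists>C. \<forall>x y. norm (f x - f y) \<le> C * norm (x - y))}"

text \<open>Lipschitz constant: sup of the difference quotients (0 is added only so that the
  sup is over a nonempty set when X is trivial; all quotients are nonnegative).\<close>
definition lipnorm :: "('a::real_normed_vector \<Rightarrow> 'b::real_normed_vector) \<Rightarrow> real" where
  "lipnorm f = Sup (insert 0 {norm (f x - f y) / norm (x - y) | x y. x \<noteq> y})"

text \<open>Operators on Lip_0(X,Y) are represented by functions on all maps, extended by 0
  outside Lip_0(X,Y).\<close>
definition BL :: "(('a::real_normed_vector \<Rightarrow> 'b::real_normed_vector) \<Rightarrow> 'b) set" where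
  "BL = {\<gamma>. (\<forall>f\<in>Lip0. \<forall>g\<in>Lip0. \<gamma> (\<lambda>x. f x + g x) = \<gamma> f + \<gamma> g)
          \<and> (\<forall>f\<in>Lip0. \<forall>c. \<gamma> (\<lambda>x. c *\<^sub>R f x) = c *\<^sub>R \<gamma> f)
          \<and> (\<exists>K. \<forall>f\<in>Lip0. norm (\<gamma> f) \<le> K * lipnorm f)
          \<and> (\<forall>f. f \<notin> Lip0 \<longrightarrow> \<gamma> f = 0)}"

definition opnorm :: "(('a::real_normed_vector \<Rightarrow> 'b::real_normed_vector) \<Rightarrow> 'b) \<Rightarrow> real" where
  "opnorm \<gamma> = Sup {norm (\<gamma> f) | f. f \<in> Lip0 \<and> lipnorm f \<le> 1}"

definition delta :: "'a::real_normed_vector \<Rightarrow> ('a \<Rightarrow> 'b::real_normed_vector) \<Rightarrow> 'b" where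
  "delta x = (\<lambda>f. if f \<in> Lip0 then f x else 0)"

definition span_delta :: "(('a::real_normed_vector \<Rightarrow> 'b::real_normed_vector) \<Rightarrow> 'b) set" where
  "span_delta = {\<gamma>. \<exists>(n::nat) (c::nat \<Rightarrow> real) (x::nat \<Rightarrow> 'a). \<gamma> = (\<lambda>f::'a \<Rightarrow> 'b. \<Sum>i<n. c i *\<^sub>R delta (x i) f)}"

definition FY :: "(('a::real_normed_vector \<Rightarrow> 'b::real_normed_vector) \<Rightarrow> 'b) set" where
  "FY = {\<gamma> \<in> BL. \<forall>e>0. \<exists>\<eta>\<in>span_delta. opnorm (\<lambda>f. \<gamma> f - \<eta> f) < e}"

definition closed_subspace_FY :: "(('a::real_normed_vector \<Rightarrow> 'b::real_normed_vector) \<Rightarrow> 'b) set \<Rightarrow> bool" where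
  "closed_subspace_FY D \<longleftrightarrow> D \<subseteq> FY \<and> (\<lambda>f. 0) \<in> D
     \<and> (\<forall>\<gamma>\<in>D. \<forall>\<eta>\<in>D. (\<lambda>f. \<gamma> f + \<eta> f) \<in> D)
     \<and> (\<forall>\<gamma>\<in>D. \<forall>c. (\<lambda>f. c *\<^sub>R \<gamma> f) \<in> D)
     \<and> (\<forall>\<gamma>\<in>FY. (\<forall>e>0. \<exists>\<eta>\<in>D. opnorm (\<lambda>f. \<gamma> f - \<eta> f) < e) \<longrightarrow> \<gamma> \<in> D)"

definition preannih :: "(('a::real_normed_vector \<Rightarrow> 'b::real_normed_vector) \<Rightarrow> 'b) set \<Rightarrow> ('a \<Rightarrow> 'b) set" where
  "preannih D = {f \<in> Lip0. \<forall>\<gamma>\<in>D. \<gamma> f = 0}"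

definition coset :: "(('a::real_normed_vector \<Rightarrow> 'b::real_normed_vector) \<Rightarrow> 'b) set
    \<Rightarrow> (('a \<Rightarrow> 'b) \<Rightarrow> 'b) \<Rightarrow> (('a \<Rightarrow> 'b) \<Rightarrow> 'b) set" where
  "coset D \<gamma> = {(\<lambda>f. \<gamma> f + \<eta> f) | \<eta>. \<eta> \<in> D}"

definition quot :: "(('a::real_normed_vector \<Rightarrow> 'b::real_normed_vector) \<Rightarrow> 'b) set
    \<Rightarrow> (('a \<Rightarrow> 'b) \<Rightarrow> 'b) set set" where
  "quot D = coset D ` FY"

definition qnorm :: "(('a::real_normed_vector \<Rightarrow> 'b::real_normed_vector) \<Rightarrow> 'b) set \<Rightarrow> real" where
  "qnorm C = Inf {opnorm \<gamma> | \<gamma>. \<gamma> \<in> C}"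

definition BLQ :: "(('a::real_normed_vector \<Rightarrow> 'b::real_normed_vector) \<Rightarrow> 'b) set
    \<Rightarrow> ((('a \<Rightarrow> 'b) \<Rightarrow> 'b) set \<Rightarrow> 'b) set" where
  "BLQ D = {T. (\<forall>\<gamma>\<in>FY. \<forall>\<eta>\<in>FY. T (coset D (\<lambda>f. \<gamma> f + \<eta> f)) = T (coset D \<gamma>) + T (coset D \<eta>))
          \<and> (\<forall>\<gamma>\<in>FY. \<forall>c. T (coset D (\<lambda>f. c *\<^sub>R \<gamma> f)) = c *\<^sub>R T (coset D \<gamma>))
          \<and> (\<exists>K. \<forall>C\<in>quot D. norm (T C) \<le> K * qnorm C)
          \<and> (\<forall>C. C \<notin> quot D \<longrightarrow> T C = 0)}"

definition qopnorm :: "(('a::real_normed_vector \<Rightarrow> 'b::real_normed_vector) \<Rightarrow> 'b) set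
    \<Rightarrow> ((('a \<Rightarrow> 'b) \<Rightarrow> 'b) set \<Rightarrow> 'b) \<Rightarrow> real" where
  "qopnorm D T = Sup {norm (T C) | C. C \<in> quot D \<and> qnorm C \<le> 1}"

definition Phi :: "(('a::real_normed_vector \<Rightarrow> 'b::real_normed_vector) \<Rightarrow> 'b) set
    \<Rightarrow> ('a \<Rightarrow> 'b) \<Rightarrow> (('a \<Rightarrow> 'b) \<Rightarrow> 'b) set \<Rightarrow> 'b" where
  "Phi D f = (\<lambda>C. if C \<in> quot D then (SOME \<gamma>. \<gamma> \<in> C) f else 0)"

end

theory Submission
  imports Defs
begin

lemma sum_split_add: "(\<Sum>i<m+n. g i) = (\<Sum>i<m. g i) + (\<Sum>i<n. g (m+i))"
  for g :: "nat \<Rightarrow> 'c::comm_monoid_add"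
  by (induction n) (auto simp: add.assoc)

lemma Lip0_lipschitz: "f \<in> Lip0 \<Longrightarrow> \<exists>C. \<forall>x y. norm (f x - f y) \<le> C * norm (x - y)"
  by (simp add: Lip0_def)

lemma Lip0_0: "f \<in> Lip0 \<Longrightarrow> f 0 = 0"
  by (simp add: Lip0_def)

lemma lip_bdd:
  assumes "f \<in> Lip0"
  shows "bdd_above (insert 0 {norm (f x - f y) / norm (x - y) | x y. x \<noteq> y})"
proof -
  obtain C where C: "\<forall>x y. norm (f x - f y) \<le> C * norm (x - y)" using Lip0_lipschitz[OF assms] by blast
  have "\<forall>q\<in>insert 0 {norm (f x - f y) / norm (x - y) | x y. x \<noteq> y}. q \<le> max 0 C"
  proof
    fix q assume "q \<in> insert 0 {norm (f x - f y) / norm (x - y) | x y. x \<noteq> y}"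
    then show "q \<le> max 0 C"
    proof
      assume "q = 0" then show ?thesis by simp
    next
      assume "q \<in> {norm (f x - f y) / norm (x - y) | x y. x \<noteq> y}"
      then obtain x y where xy: "x \<noteq> y" "q = norm (f x - f y) / norm (x - y)" by blast
      have "norm (x - y) > 0" using xy by simp
      then have "q \<le> C" using C xy by (simp add: divide_le_eq)
      then show ?thesis by simp
    qed
  qed
  then show ?thesis by (meson bdd_aboveI)
qed

lemma lipnorm_nonneg: "f \<in> Lip0 \<Longrightarrow> 0 \<le> lipnorm f"
  unfolding lipnorm_def by (rule cSup_upper[OF _ lip_bdd]) auto

lemma lipnorm_ge:
  assumes "f \<in> Lip0"
  shows "norm (f x - f y) \<le> lipnorm f * norm (x - y)"
proof (cases "x = y")
  case True then show ?thesis by simp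
next
  case False
  have "norm (f x - f y) / norm (x - y) \<le> lipnorm f"
    unfolding lipnorm_def by (rule cSup_upper[OF _ lip_bdd[OF assms]]) (use False in auto)
  moreover have "norm (x - y) > 0" using False by simp
  ultimately show ?thesis by (simp add: divide_le_eq)
qed

lemma lipnorm_le:
  assumes "\<And>x y. norm (f x - f y) \<le> M * norm (x - y)" "0 \<le> M"
  shows "lipnorm f \<le> M"
  unfolding lipnorm_def
proof (rule cSup_least)
  fix q assume "q \<in> insert 0 {norm (f x - f y) / norm (x - y) | x y. x \<noteq> y}"
  then show "q \<le> M"
  proof
    assume "q = 0" then show ?thesis using assms by simp
  next
    assume "q \<in> {norm (f x - f y) / norm (x - y) | x y. x \<noteq> y}"
    then obtain x y where xy: "x \<noteq> y" "q = norm (f x - f y) / norm (x - y)" by blast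
    have "norm (x - y) > 0" using xy by simp
    then show "q \<le> M" using assms(1)[of x y] xy by (simp add: divide_le_eq)
  qed
qed auto

lemma Lip0_norm: "f \<in> Lip0 \<Longrightarrow> norm (f x) \<le> lipnorm f * norm x"
  using lipnorm_ge[of f x 0] by (simp add: Lip0_0)

lemma Lip0_zero: "(\<lambda>x. 0) \<in> Lip0"
  unfolding Lip0_def by (auto intro: exI[where x=0])

lemma lipnorm_zero: "lipnorm (\<lambda>x::'a::real_normed_vector. 0::'b::real_normed_vector) = (0::real)"
proof -
  have "lipnorm (\<lambda>x::'a. 0::'b) \<le> 0" by (rule lipnorm_le) auto
  moreover have "0 \<le> lipnorm (\<lambda>x::'a. 0::'b)" by (rule lipnorm_nonneg[OF Lip0_zero])
  ultimately show ?thesis by simp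
qed

lemma Lip0_add: "f \<in> Lip0 \<Longrightarrow> g \<in> Lip0 \<Longrightarrow> (\<lambda>x. f x + g x) \<in> Lip0"
proof -
  assume f: "f \<in> Lip0" and g: "g \<in> Lip0"
  have "norm ((f x + g x) - (f y + g y)) \<le> (lipnorm f + lipnorm g) * norm (x - y)" for x y
  proof -
    have "norm ((f x + g x) - (f y + g y)) \<le> norm (f x - f y) + norm (g x - g y)"
      by (metis add_diff_add norm_triangle_ineq)
    also have "\<dots> \<le> lipnorm f * norm (x - y) + lipnorm g * norm (x - y)"
      using lipnorm_ge[OF f] lipnorm_ge[OF g] by (intro add_mono) auto
    finally show ?thesis by (simp add: algebra_simps)
  qed
  then show ?thesis using f g by (auto simp: Lip0_def)
qed

lemma Lip0_scale: "f \<in> Lip0 \<Longrightarrow> (\<lambda>x. c *\<^sub>R f x) \<in> Lip0"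
proof -
  assume f: "f \<in> Lip0"
  have "norm (c *\<^sub>R f x - c *\<^sub>R f y) \<le> (\<bar>c\<bar> * lipnorm f) * norm (x - y)" for x y
  proof -
    have "norm (c *\<^sub>R f x - c *\<^sub>R f y) = \<bar>c\<bar> * norm (f x - f y)"
      by (metis norm_scaleR scaleR_diff_right)
    also have "\<dots> \<le> \<bar>c\<bar> * (lipnorm f * norm (x - y))"
      using lipnorm_ge[OF f] by (intro mult_left_mono) auto
    finally show ?thesis by simp
  qed
  then show ?thesis using f by (auto simp: Lip0_def)
qed

lemma lipnorm0_imp: "f \<in> Lip0 \<Longrightarrow> lipnorm f = 0 \<Longrightarrow> f = (\<lambda>x. 0)"
  using Lip0_norm[of f] by (intro ext) (metis mult_zero_left norm_le_zero_iff)


lemma BL_add_lin: "\<gamma> \<in> BL \<Longrightarrow> f \<in> Lip0 \<Longrightarrow> g \<in> Lip0 \<Longrightarrow> \<gamma> (\<lambda>x. f x + g x) = \<gamma> f + \<gamma> g"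
  by (simp add: BL_def)

lemma BL_scale_lin: "\<gamma> \<in> BL \<Longrightarrow> f \<in> Lip0 \<Longrightarrow> \<gamma> (\<lambda>x. c *\<^sub>R f x) = c *\<^sub>R \<gamma> f"
  by (simp add: BL_def)

lemma BL_off: "\<gamma> \<in> BL \<Longrightarrow> f \<notin> Lip0 \<Longrightarrow> \<gamma> f = 0"
  by (simp add: BL_def)

lemma BL_bounded: "\<gamma> \<in> BL \<Longrightarrow> \<exists>K. \<forall>f\<in>Lip0. norm (\<gamma> f) \<le> K * lipnorm f"
  by (simp add: BL_def)

lemma BL_zero_at: "\<gamma> \<in> BL \<Longrightarrow> \<gamma> (\<lambda>x. 0) = 0"
  using BL_scale_lin[OF _ Lip0_zero, of \<gamma> 0] by simp

lemma BL_bdd: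
  assumes "\<gamma> \<in> BL"
  shows "bdd_above {norm (\<gamma> f) | f. f \<in> Lip0 \<and> lipnorm f \<le> 1}"
proof -
  obtain K where K: "\<forall>f\<in>Lip0. norm (\<gamma> f) \<le> K * lipnorm f" using BL_bounded[OF assms] by blast
  have "q \<le> \<bar>K\<bar>" if qq: "q \<in> {norm (\<gamma> f) | f. f \<in> Lip0 \<and> lipnorm f \<le> 1}" for q
  proof -
    obtain f where f: "f \<in> Lip0" "lipnorm f \<le> 1" "q = norm (\<gamma> f)" using qq by blast
    have "K * lipnorm f \<le> \<bar>K\<bar> * lipnorm f" using lipnorm_nonneg[OF f(1)]
      by (simp add: mult_right_mono)
    also have "\<dots> \<le> \<bar>K\<bar>" using f(2) lipnorm_nonneg[OF f(1)] by (simp add: mult_left_le)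
    finally show ?thesis using K f by force
  qed
  then show ?thesis by (meson bdd_aboveI)
qed

lemma opnorm_upper: "\<gamma> \<in> BL \<Longrightarrow> f \<in> Lip0 \<Longrightarrow> lipnorm f \<le> 1 \<Longrightarrow> norm (\<gamma> f) \<le> opnorm \<gamma>"
  unfolding opnorm_def by (rule cSup_upper[OF _ BL_bdd]) auto

lemma opnorm_nonneg: "\<gamma> \<in> BL \<Longrightarrow> 0 \<le> opnorm \<gamma>"
  using opnorm_upper[OF _ Lip0_zero] lipnorm_zero by (metis norm_ge_zero order.trans zero_le_one)

lemma opnorm_le:
  assumes "\<And>f. f \<in> Lip0 \<Longrightarrow> lipnorm f \<le> 1 \<Longrightarrow> norm (\<gamma> f) \<le> M"
  shows "opnorm \<gamma> \<le> M"
  unfolding opnorm_def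
proof (rule cSup_least)
  show "{norm (\<gamma> f) |f. f \<in> Lip0 \<and> lipnorm f \<le> 1} \<noteq> {}"
  proof -
    have "norm (\<gamma> (\<lambda>x. 0)) \<in> {norm (\<gamma> f) |f. f \<in> Lip0 \<and> lipnorm f \<le> 1}"
      by (auto intro!: exI[of _ "\<lambda>x. 0"] simp: Lip0_zero lipnorm_zero)
    then show ?thesis by blast
  qed
qed (use assms in auto)

lemma opnorm_bound:
  assumes g: "\<gamma> \<in> BL" and f: "f \<in> Lip0"
  shows "norm (\<gamma> f) \<le> opnorm \<gamma> * lipnorm f"
proof (cases "lipnorm f = 0")
  case True
  then have "f = (\<lambda>x. 0)" using lipnorm0_imp f by blast
  then show ?thesis using BL_zero_at[OF g] True by simp
next
  case False
  define L where "L = lipnorm f"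
  have L: "L > 0" using False lipnorm_nonneg[OF f] unfolding L_def by simp
  define h where "h = (\<lambda>x. (1/L) *\<^sub>R f x)"
  have h: "h \<in> Lip0" unfolding h_def by (rule Lip0_scale[OF f])
  have "norm (h x - h y) \<le> 1 * norm (x - y)" for x y
  proof -
    have "norm (h x - h y) = (1/L) * norm (f x - f y)"
      unfolding h_def using L by (metis abs_of_pos norm_scaleR scaleR_diff_right zero_less_divide_1_iff)
    also have "\<dots> \<le> (1/L) * (L * norm (x - y))"
      using lipnorm_ge[OF f] L unfolding L_def by (intro mult_left_mono) auto
    finally show ?thesis using L by simp
  qed
  then have "lipnorm h \<le> 1" by (intro lipnorm_le) auto
  then have "norm (\<gamma> h) \<le> opnorm \<gamma>" using opnorm_upper[OF g h] by simp
  moreover have "\<gamma> h = (1/L) *\<^sub>R \<gamma> f" unfolding h_def by (rule BL_scale_lin[OF g f])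
  ultimately have "(1/L) * norm (\<gamma> f) \<le> opnorm \<gamma>" using L by simp
  then show ?thesis using L unfolding L_def by (simp add: field_simps)
qed

lemma BL_add: assumes "\<gamma> \<in> BL" "\<eta> \<in> BL" shows "(\<lambda>f. \<gamma> f + \<eta> f) \<in> BL"
proof -
  have "norm (\<gamma> f + \<eta> f) \<le> (opnorm \<gamma> + opnorm \<eta>) * lipnorm f" if "f \<in> Lip0" for f :: "'a \<Rightarrow> 'b"
    using norm_triangle_ineq[of "\<gamma> f" "\<eta> f"] opnorm_bound[OF assms(1) that] opnorm_bound[OF assms(2) that]
    by (simp add: algebra_simps)
  then have bnd: "\<exists>K. \<forall>f\<in>Lip0. norm (\<gamma> f + \<eta> f) \<le> K * lipnorm f" by blast
  show ?thesis using assms Lip0_add Lip0_scale bnd unfolding BL_def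
    by (auto simp: algebra_simps scaleR_add_right)
qed

lemma BL_scale: assumes "\<gamma> \<in> BL" shows "(\<lambda>f. c *\<^sub>R \<gamma> f) \<in> BL"
proof -
  have "norm (c *\<^sub>R \<gamma> f) \<le> (\<bar>c\<bar> * opnorm \<gamma>) * lipnorm f" if "f \<in> Lip0" for f :: "'a \<Rightarrow> 'b"
    using opnorm_bound[OF assms that] by (simp add: mult.assoc mult_left_mono)
  then have bnd: "\<exists>K. \<forall>f\<in>Lip0. norm (c *\<^sub>R \<gamma> f) \<le> K * lipnorm f" by blast
  show ?thesis using assms Lip0_add Lip0_scale bnd unfolding BL_def
    by (auto simp: algebra_simps scaleR_add_right)
qed

lemma BL_diff: assumes "\<gamma> \<in> BL" "\<eta> \<in> BL" shows "(\<lambda>f. \<gamma> f - \<eta> f) \<in> BL"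
  using BL_add[OF assms(1) BL_scale[OF assms(2), of "-1"]] by simp

lemma opnorm_add: assumes "\<gamma> \<in> BL" "\<eta> \<in> BL"
  shows "opnorm (\<lambda>f. \<gamma> f + \<eta> f) \<le> opnorm \<gamma> + opnorm \<eta>"
proof (rule opnorm_le)
  fix f :: "'a \<Rightarrow> 'b" assume f: "f \<in> Lip0" "lipnorm f \<le> 1"
  have "norm (\<gamma> f + \<eta> f) \<le> opnorm \<gamma> * lipnorm f + opnorm \<eta> * lipnorm f"
    using norm_triangle_ineq[of "\<gamma> f" "\<eta> f"] opnorm_bound[OF assms(1) f(1)] opnorm_bound[OF assms(2) f(1)]
    by simp
  also have "\<dots> \<le> opnorm \<gamma> + opnorm \<eta>"
    using f opnorm_nonneg[OF assms(1)] opnorm_nonneg[OF assms(2)] lipnorm_nonneg[OF f(1)]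
    by (intro add_mono) (auto simp: mult_left_le)
  finally show "norm (\<gamma> f + \<eta> f) \<le> opnorm \<gamma> + opnorm \<eta>" .
qed

lemma opnorm_scale: assumes "\<gamma> \<in> BL"
  shows "opnorm (\<lambda>f. c *\<^sub>R \<gamma> f) \<le> \<bar>c\<bar> * opnorm \<gamma>"
proof (rule opnorm_le)
  fix f :: "'a \<Rightarrow> 'b" assume f: "f \<in> Lip0" "lipnorm f \<le> 1"
  have "norm (c *\<^sub>R \<gamma> f) \<le> \<bar>c\<bar> * (opnorm \<gamma> * lipnorm f)"
    using opnorm_bound[OF assms f(1)] by (simp add: mult_left_mono)
  also have "\<dots> \<le> \<bar>c\<bar> * opnorm \<gamma>"
    using f opnorm_nonneg[OF assms] lipnorm_nonneg[OF f(1)]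
    by (intro mult_left_mono) (auto simp: mult_left_le)
  finally show "norm (c *\<^sub>R \<gamma> f) \<le> \<bar>c\<bar> * opnorm \<gamma>" .
qed

lemma delta_Lip0: "f \<in> Lip0 \<Longrightarrow> delta x f = f x"
  by (simp add: delta_def)

lemma delta_BL: "delta x \<in> BL"
proof -
  have "norm (delta x f) \<le> norm x * lipnorm f" if "f \<in> Lip0" for f :: "'a \<Rightarrow> 'b"
    using Lip0_norm[OF that, of x] that by (simp add: delta_def mult.commute)
  then show ?thesis unfolding BL_def
    by (auto simp: delta_def Lip0_add Lip0_scale)
qed

lemma opnorm_delta_diff: "opnorm (\<lambda>f. delta x f - delta y f) \<le> norm (x - y)"
proof (rule opnorm_le)
  fix f :: "'a \<Rightarrow> 'b" assume f: "f \<in> Lip0" "lipnorm f \<le> 1"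
  have "norm (f x - f y) \<le> lipnorm f * norm (x - y)" by (rule lipnorm_ge[OF f(1)])
  also have "\<dots> \<le> 1 * norm (x - y)" using f(2) by (intro mult_right_mono) auto
  finally show "norm (delta x f - delta y f) \<le> norm (x - y)" using f by (simp add: delta_def)
qed

lemma delta_0: "delta 0 = (\<lambda>f. 0)"
  by (auto simp: delta_def Lip0_0)


lemma BL_zero: "(\<lambda>f. 0) \<in> BL"
  using BL_scale[OF delta_BL, of 0] by simp

lemma sum_delta_BL: "(\<lambda>f. \<Sum>i<(n::nat). c i *\<^sub>R delta (x i) f) \<in> BL"
proof (induction n)
  case 0 then show ?case using BL_zero by simp
next
  case (Suc n)
  show ?case using BL_add[OF Suc BL_scale[OF delta_BL, of "c n" "x n"]] by simp
qed

lemma span_BL: "\<eta> \<in> span_delta \<Longrightarrow> \<eta> \<in> BL"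
  unfolding span_delta_def using sum_delta_BL by blast

lemma span_add:
  assumes "\<eta>1 \<in> span_delta" "\<eta>2 \<in> span_delta"
  shows "(\<lambda>f. \<eta>1 f + \<eta>2 f) \<in> span_delta"
proof -
  obtain n1 c1 x1 where 1: "\<eta>1 = (\<lambda>f. \<Sum>i<(n1::nat). c1 i *\<^sub>R delta (x1 i) f)"
    using assms(1) unfolding span_delta_def by blast
  obtain n2 c2 x2 where 2: "\<eta>2 = (\<lambda>f. \<Sum>i<(n2::nat). c2 i *\<^sub>R delta (x2 i) f)"
    using assms(2) unfolding span_delta_def by blast
  define c where "c i = (if i < n1 then c1 i else c2 (i - n1))" for i
  define x where "x i = (if i < n1 then x1 i else x2 (i - n1))" for i
  have "(\<lambda>f. \<eta>1 f + \<eta>2 f) = (\<lambda>f. \<Sum>i<n1+n2. c i *\<^sub>R delta (x i) f)"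
    unfolding 1 2 sum_split_add c_def x_def by simp
  then show ?thesis unfolding span_delta_def by blast
qed

lemma span_scale:
  assumes "\<eta> \<in> span_delta"
  shows "(\<lambda>f. a *\<^sub>R \<eta> f) \<in> span_delta"
proof -
  obtain n c x where 1: "\<eta> = (\<lambda>f. \<Sum>i<(n::nat). c i *\<^sub>R delta (x i) f)"
    using assms(1) unfolding span_delta_def by blast
  have "(\<lambda>f. a *\<^sub>R \<eta> f) = (\<lambda>f. \<Sum>i<n. (a * c i) *\<^sub>R delta (x i) f)"
    unfolding 1 by (simp add: scaleR_sum_right)
  then show ?thesis unfolding span_delta_def
    by (intro CollectI exI[of _ n] exI[of _ "\<lambda>i. a * c i"] exI[of _ x])
qed

lemma delta_span: "delta x \<in> span_delta"
proof -
  have "delta x = (\<lambda>f. \<Sum>i<(1::nat). (\<lambda>i. 1) i *\<^sub>R delta ((\<lambda>i. x) i) f)" by simp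
  then show ?thesis unfolding span_delta_def
    by (intro CollectI exI[of _ "1::nat"] exI[of _ "\<lambda>i. 1::real"] exI[of _ "\<lambda>i. x"])
qed

lemma opnorm_zero: "opnorm (\<lambda>f::'a::real_normed_vector \<Rightarrow> 'b::real_normed_vector. 0::'b) = 0"
proof -
  have "opnorm (\<lambda>f::'a \<Rightarrow> 'b. 0::'b) \<le> 0" by (rule opnorm_le) simp
  moreover have "0 \<le> opnorm (\<lambda>f::'a \<Rightarrow> 'b. 0::'b)" by (rule opnorm_nonneg[OF BL_zero])
  ultimately show ?thesis by simp
qed

lemma FY_BL: "\<gamma> \<in> FY \<Longrightarrow> \<gamma> \<in> BL"
  by (simp add: FY_def)

lemma span_FY: assumes "\<eta> \<in> span_delta" shows "\<eta> \<in> FY"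
proof -
  have "opnorm (\<lambda>f. \<eta> f - \<eta> f) = 0" using opnorm_zero by simp
  then show ?thesis unfolding FY_def using span_BL[OF assms] assms by force
qed

lemma delta_FY: "delta x \<in> FY"
  by (rule span_FY[OF delta_span])

lemma FY_approx: "\<gamma> \<in> FY \<Longrightarrow> e > 0 \<Longrightarrow> \<exists>\<eta>\<in>span_delta. opnorm (\<lambda>f. \<gamma> f - \<eta> f) < e"
  by (simp add: FY_def)

lemma FY_add:
  assumes "\<gamma> \<in> FY" "\<eta> \<in> FY"
  shows "(\<lambda>f. \<gamma> f + \<eta> f) \<in> FY"
proof -
  have "\<exists>\<zeta>\<in>span_delta. opnorm (\<lambda>f. (\<gamma> f + \<eta> f) - \<zeta> f) < e" if e: "e > 0" for e
  proof -
    obtain \<eta>1 where 1: "\<eta>1 \<in> span_delta" "opnorm (\<lambda>f. \<gamma> f - \<eta>1 f) < e/2"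
      using FY_approx[OF assms(1), of "e/2"] e by auto
    obtain \<eta>2 where 2: "\<eta>2 \<in> span_delta" "opnorm (\<lambda>f. \<eta> f - \<eta>2 f) < e/2"
      using FY_approx[OF assms(2), of "e/2"] e by auto
    have eq: "(\<lambda>f. (\<gamma> f + \<eta> f) - (\<eta>1 f + \<eta>2 f)) = (\<lambda>f. (\<gamma> f - \<eta>1 f) + (\<eta> f - \<eta>2 f))"
      by (simp add: algebra_simps)
    have "opnorm (\<lambda>f. (\<gamma> f + \<eta> f) - (\<eta>1 f + \<eta>2 f)) \<le> opnorm (\<lambda>f. \<gamma> f - \<eta>1 f) + opnorm (\<lambda>f. \<eta> f - \<eta>2 f)"
      unfolding eq
      by (rule opnorm_add; rule BL_diff) (use assms 1 2 FY_BL span_BL in auto)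
    then have "opnorm (\<lambda>f. (\<gamma> f + \<eta> f) - (\<eta>1 f + \<eta>2 f)) < e" using 1 2 by simp
    then show ?thesis using span_add[OF 1(1) 2(1)] by force
  qed
  then show ?thesis using BL_add[OF FY_BL[OF assms(1)] FY_BL[OF assms(2)]] unfolding FY_def by blast
qed

lemma FY_scale:
  assumes "\<gamma> \<in> FY"
  shows "(\<lambda>f. a *\<^sub>R \<gamma> f) \<in> FY"
proof -
  have "\<exists>\<zeta>\<in>span_delta. opnorm (\<lambda>f. a *\<^sub>R \<gamma> f - \<zeta> f) < e" if e: "e > 0" for e
  proof -
    have e': "e / (\<bar>a\<bar> + 1) > 0" using e by simp
    obtain \<eta>1 where 1: "\<eta>1 \<in> span_delta" "opnorm (\<lambda>f. \<gamma> f - \<eta>1 f) < e / (\<bar>a\<bar> + 1)"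
      using FY_approx[OF assms(1) e'] by auto
    have bl: "(\<lambda>f. \<gamma> f - \<eta>1 f) \<in> BL" using BL_diff assms 1 FY_BL span_BL by blast
    have eq: "(\<lambda>f. a *\<^sub>R \<gamma> f - a *\<^sub>R \<eta>1 f) = (\<lambda>f. a *\<^sub>R (\<gamma> f - \<eta>1 f))"
      by (simp add: algebra_simps)
    have "opnorm (\<lambda>f. a *\<^sub>R \<gamma> f - a *\<^sub>R \<eta>1 f) \<le> \<bar>a\<bar> * opnorm (\<lambda>f. \<gamma> f - \<eta>1 f)"
      unfolding eq by (rule opnorm_scale[OF bl])
    also have "\<dots> \<le> \<bar>a\<bar> * (e / (\<bar>a\<bar> + 1))"
      using 1(2) by (intro mult_left_mono) auto
    also have "\<dots> < e" using e by (simp add: field_simps)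
    finally show ?thesis using span_scale[OF 1(1), of a] by force
  qed
  then show ?thesis using BL_scale[OF FY_BL[OF assms]] unfolding FY_def by blast
qed

lemma FY_diff:
  assumes "\<gamma> \<in> FY" "\<eta> \<in> FY"
  shows "(\<lambda>f. \<gamma> f - \<eta> f) \<in> FY"
  using FY_add[OF assms(1) FY_scale[OF assms(2), of "-1"]] by simp


lemma cs_sub: "closed_subspace_FY D \<Longrightarrow> \<gamma> \<in> D \<Longrightarrow> \<gamma> \<in> FY"
  by (auto simp: closed_subspace_FY_def)
lemma cs_zero: "closed_subspace_FY D \<Longrightarrow> (\<lambda>f. 0) \<in> D"
  by (auto simp: closed_subspace_FY_def)
lemma cs_add: "closed_subspace_FY D \<Longrightarrow> \<gamma> \<in> D \<Longrightarrow> \<eta> \<in> D \<Longrightarrow> (\<lambda>f. \<gamma> f + \<eta> f) \<in> D"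
  by (auto simp: closed_subspace_FY_def)
lemma cs_scale: "closed_subspace_FY D \<Longrightarrow> \<gamma> \<in> D \<Longrightarrow> (\<lambda>f. c *\<^sub>R \<gamma> f) \<in> D"
  by (auto simp: closed_subspace_FY_def)

lemma coset_iff: "\<gamma>' \<in> coset D \<gamma> \<longleftrightarrow> (\<exists>\<eta>\<in>D. \<gamma>' = (\<lambda>f. \<gamma> f + \<eta> f))"
  by (auto simp: coset_def)

lemma coset_self: "closed_subspace_FY D \<Longrightarrow> \<gamma> \<in> coset D \<gamma>"
  unfolding coset_iff using cs_zero by fastforce

lemma coset_FY: "closed_subspace_FY D \<Longrightarrow> \<gamma> \<in> FY \<Longrightarrow> \<gamma>' \<in> coset D \<gamma> \<Longrightarrow> \<gamma>' \<in> FY"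
  unfolding coset_iff using FY_add cs_sub by blast

lemma coset_D:
  assumes cs: "closed_subspace_FY D" and g: "\<gamma> \<in> D"
  shows "coset D \<gamma> = D"
proof
  show "coset D \<gamma> \<subseteq> D" using cs_add[OF cs g] unfolding coset_iff subset_iff by blast
  show "D \<subseteq> coset D \<gamma>"
  proof
    fix \<eta> assume e: "\<eta> \<in> D"
    have m: "(\<lambda>f. \<eta> f + (-1) *\<^sub>R \<gamma> f) \<in> D" using cs_add[OF cs e cs_scale[OF cs g]] .
    show "\<eta> \<in> coset D \<gamma>" unfolding coset_iff
      by (rule bexI[of _ "\<lambda>f. \<eta> f + (-1) *\<^sub>R \<gamma> f"]) (use m in auto)
  qed
qed

lemma qnorm_nonneg:
  assumes cs: "closed_subspace_FY D" and g: "\<gamma> \<in> FY"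
  shows "0 \<le> qnorm (coset D \<gamma>)"
  unfolding qnorm_def
proof (rule cInf_greatest)
  show "{opnorm \<gamma>' |\<gamma>'. \<gamma>' \<in> coset D \<gamma>} \<noteq> {}" using coset_self[OF cs] by blast
  fix q assume "q \<in> {opnorm \<gamma>' |\<gamma>'. \<gamma>' \<in> coset D \<gamma>}"
  then obtain \<gamma>' where "\<gamma>' \<in> coset D \<gamma>" "q = opnorm \<gamma>'" by blast
  then show "0 \<le> q" using opnorm_nonneg FY_BL coset_FY[OF cs g] by blast
qed

lemma qnorm_le:
  assumes cs: "closed_subspace_FY D" and g: "\<gamma> \<in> FY" and g': "\<gamma>' \<in> coset D \<gamma>"
  shows "qnorm (coset D \<gamma>) \<le> opnorm \<gamma>'"
  unfolding qnorm_def
proof (rule cInf_lower)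
  show "opnorm \<gamma>' \<in> {opnorm \<gamma>' |\<gamma>'. \<gamma>' \<in> coset D \<gamma>}" using g' by blast
  have "\<forall>q\<in>{opnorm \<gamma>' |\<gamma>'. \<gamma>' \<in> coset D \<gamma>}. 0 \<le> q"
    using opnorm_nonneg FY_BL coset_FY[OF cs g] by blast
  then show "bdd_below {opnorm \<gamma>' |\<gamma>'. \<gamma>' \<in> coset D \<gamma>}" by (meson bdd_belowI)
qed

lemma preannih_Lip0: "f \<in> preannih D \<Longrightarrow> f \<in> Lip0"
  by (simp add: preannih_def)
lemma preannih_D: "f \<in> preannih D \<Longrightarrow> \<gamma> \<in> D \<Longrightarrow> \<gamma> f = 0"
  by (simp add: preannih_def)

lemma coset_eval:
  assumes "f \<in> preannih D" "\<gamma>' \<in> coset D \<gamma>"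
  shows "\<gamma>' f = \<gamma> f"
  using assms preannih_D unfolding coset_iff by fastforce

lemma coset_quot: "\<gamma> \<in> FY \<Longrightarrow> coset D \<gamma> \<in> quot D"
  by (simp add: quot_def)

lemma Phi_coset:
  assumes cs: "closed_subspace_FY D" and f: "f \<in> preannih D" and g: "\<gamma> \<in> FY"
  shows "Phi D f (coset D \<gamma>) = \<gamma> f"
proof -
  have "(SOME \<gamma>'. \<gamma>' \<in> coset D \<gamma>) \<in> coset D \<gamma>" by (rule someI[where x=\<gamma>]) (rule coset_self[OF cs])
  then show ?thesis unfolding Phi_def using coset_quot[OF g] coset_eval[OF f] by simp
qed

lemma Phi_bound:
  assumes cs: "closed_subspace_FY D" and f: "f \<in> preannih D" and g: "\<gamma> \<in> FY"
  shows "norm (\<gamma> f) \<le> lipnorm f * qnorm (coset D \<gamma>)"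
proof -
  have fL: "f \<in> Lip0" using f by (rule preannih_Lip0)
  have each: "norm (\<gamma> f) \<le> lipnorm f * opnorm \<gamma>'" if "\<gamma>' \<in> coset D \<gamma>" for \<gamma>'
  proof -
    have "\<gamma>' \<in> BL" using coset_FY[OF cs g that] FY_BL by blast
    then have "norm (\<gamma>' f) \<le> opnorm \<gamma>' * lipnorm f" using opnorm_bound fL by blast
    then show ?thesis using coset_eval[OF f that] by (simp add: mult.commute)
  qed
  show ?thesis
  proof (cases "lipnorm f = 0")
    case True then show ?thesis using each[OF coset_self[OF cs]] by simp
  next
    case False
    then have L: "lipnorm f > 0" using lipnorm_nonneg[OF fL] by simp
    have "norm (\<gamma> f) / lipnorm f \<le> qnorm (coset D \<gamma>)"
      unfolding qnorm_def
    proof (rule cInf_greatest)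
      show "{opnorm \<gamma>' |\<gamma>'. \<gamma>' \<in> coset D \<gamma>} \<noteq> {}" using coset_self[OF cs] by blast
      fix q assume "q \<in> {opnorm \<gamma>' |\<gamma>'. \<gamma>' \<in> coset D \<gamma>}"
      then obtain \<gamma>' where "\<gamma>' \<in> coset D \<gamma>" "q = opnorm \<gamma>'" by blast
      then show "norm (\<gamma> f) / lipnorm f \<le> q" using each L by (simp add: divide_le_eq mult.commute)
    qed
    then show ?thesis using L by (simp add: divide_le_eq mult.commute)
  qed
qed


lemma quot_obtain: "C \<in> quot D \<Longrightarrow> \<exists>\<gamma>\<in>FY. C = coset D \<gamma>"
  by (auto simp: quot_def)

lemma preannih_add:
  assumes cs: "closed_subspace_FY D" and f: "f \<in> preannih D" and g: "g \<in> preannih D"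
  shows "(\<lambda>x. f x + g x) \<in> preannih D"
proof -
  have "\<gamma> (\<lambda>x. f x + g x) = 0" if "\<gamma> \<in> D" for \<gamma>
    using BL_add_lin[OF FY_BL[OF cs_sub[OF cs that]] preannih_Lip0[OF f] preannih_Lip0[OF g]]
      preannih_D[OF f that] preannih_D[OF g that] by simp
  then show ?thesis using Lip0_add[OF preannih_Lip0[OF f] preannih_Lip0[OF g]]
    unfolding preannih_def by blast
qed

lemma preannih_scale:
  assumes cs: "closed_subspace_FY D" and f: "f \<in> preannih D"
  shows "(\<lambda>x. c *\<^sub>R f x) \<in> preannih D"
proof -
  have "\<gamma> (\<lambda>x. c *\<^sub>R f x) = 0" if "\<gamma> \<in> D" for \<gamma>
    using BL_scale_lin[OF FY_BL[OF cs_sub[OF cs that]] preannih_Lip0[OF f]]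
      preannih_D[OF f that] by simp
  then show ?thesis using Lip0_scale[OF preannih_Lip0[OF f]]
    unfolding preannih_def by blast
qed

lemma Phi_inj:
  assumes cs: "closed_subspace_FY D"
  shows "inj_on (Phi D) (preannih D)"
proof (rule inj_onI)
  fix f g assume f: "f \<in> preannih D" and g: "g \<in> preannih D" and eq: "Phi D f = Phi D g"
  show "f = g"
  proof
    fix x
    have "Phi D f (coset D (delta x)) = Phi D g (coset D (delta x))" using eq by simp
    then have "delta x f = delta x g" using Phi_coset[OF cs _ delta_FY] f g by simp
    then show "f x = g x" using delta_Lip0 preannih_Lip0 f g by metis
  qed
qed

lemma Phi_add:
  assumes cs: "closed_subspace_FY D" and f: "f \<in> preannih D" and g: "g \<in> preannih D"
  shows "Phi D (\<lambda>x. f x + g x) = (\<lambda>C. Phi D f C + Phi D g C)"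
proof
  fix C
  show "Phi D (\<lambda>x. f x + g x) C = Phi D f C + Phi D g C"
  proof (cases "C \<in> quot D")
    case True
    then obtain \<gamma> where gm: "\<gamma> \<in> FY" "C = coset D \<gamma>" using quot_obtain by blast
    show ?thesis
      using Phi_coset[OF cs preannih_add[OF cs f g] gm(1)] Phi_coset[OF cs f gm(1)] Phi_coset[OF cs g gm(1)]
        BL_add_lin[OF FY_BL[OF gm(1)] preannih_Lip0[OF f] preannih_Lip0[OF g]] gm(2) by simp
  next
    case False then show ?thesis by (simp add: Phi_def)
  qed
qed

lemma Phi_scale:
  assumes cs: "closed_subspace_FY D" and f: "f \<in> preannih D"
  shows "Phi D (\<lambda>x. c *\<^sub>R f x) = (\<lambda>C. c *\<^sub>R Phi D f C)"
proof
  fix C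
  show "Phi D (\<lambda>x. c *\<^sub>R f x) C = c *\<^sub>R Phi D f C"
  proof (cases "C \<in> quot D")
    case True
    then obtain \<gamma> where gm: "\<gamma> \<in> FY" "C = coset D \<gamma>" using quot_obtain by blast
    show ?thesis
      using Phi_coset[OF cs preannih_scale[OF cs f] gm(1)] Phi_coset[OF cs f gm(1)]
        BL_scale_lin[OF FY_BL[OF gm(1)] preannih_Lip0[OF f]] gm(2) by simp
  next
    case False then show ?thesis by (simp add: Phi_def)
  qed
qed

lemma Phi_into:
  assumes cs: "closed_subspace_FY D" and f: "f \<in> preannih D"
  shows "Phi D f \<in> BLQ D"
proof -
  have 1: "\<forall>\<gamma>\<in>FY. \<forall>\<eta>\<in>FY. Phi D f (coset D (\<lambda>g. \<gamma> g + \<eta> g)) = Phi D f (coset D \<gamma>) + Phi D f (coset D \<eta>)"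
    by (simp add: Phi_coset[OF cs f] FY_add)
  have 2: "\<forall>\<gamma>\<in>FY. \<forall>c. Phi D f (coset D (\<lambda>g. c *\<^sub>R \<gamma> g)) = c *\<^sub>R Phi D f (coset D \<gamma>)"
    by (simp add: Phi_coset[OF cs f] FY_scale)
  have 3: "\<forall>C\<in>quot D. norm (Phi D f C) \<le> lipnorm f * qnorm C"
  proof
    fix C assume "C \<in> quot D"
    then obtain \<gamma> where gm: "\<gamma> \<in> FY" "C = coset D \<gamma>" using quot_obtain by blast
    then show "norm (Phi D f C) \<le> lipnorm f * qnorm C"
      using Phi_coset[OF cs f gm(1)] Phi_bound[OF cs f gm(1)] by simp
  qed
  have 4: "\<forall>C. C \<notin> quot D \<longrightarrow> Phi D f C = 0" by (simp add: Phi_def)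
  show ?thesis unfolding BLQ_def using 1 2 3 4 by blast
qed

lemma Phi_norm:
  assumes cs: "closed_subspace_FY D" and f: "f \<in> preannih D"
  shows "qopnorm D (Phi D f) = lipnorm f"
proof -
  define S where "S = {norm (Phi D f C) | C. C \<in> quot D \<and> qnorm C \<le> 1}"
  have fL: "f \<in> Lip0" using f by (rule preannih_Lip0)
  have bound: "q \<le> lipnorm f" if "q \<in> S" for q
  proof -
    obtain C where C: "C \<in> quot D" "qnorm C \<le> 1" "q = norm (Phi D f C)" using \<open>q \<in> S\<close> unfolding S_def by blast
    then obtain \<gamma> where gm: "\<gamma> \<in> FY" "C = coset D \<gamma>" using quot_obtain by blast
    have "q \<le> lipnorm f * qnorm C" using Phi_coset[OF cs f gm(1)] Phi_bound[OF cs f gm(1)] C gm by simp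
    also have "\<dots> \<le> lipnorm f" using C(2) lipnorm_nonneg[OF fL] by (simp add: mult_left_le)
    finally show ?thesis .
  qed
  have bdd: "bdd_above S" using bound by (meson bdd_aboveI)
  have C0: "norm (Phi D f (coset D (delta 0))) \<in> S"
  proof -
    have "qnorm (coset D (delta 0)) \<le> opnorm (delta 0 :: ('a \<Rightarrow> 'b) \<Rightarrow> 'b)"
      using qnorm_le[OF cs delta_FY coset_self[OF cs], of 0] by simp
    also have "\<dots> = 0" by (simp add: delta_0 opnorm_zero)
    finally show ?thesis unfolding S_def using coset_quot[OF delta_FY] by force
  qed
  have ne: "S \<noteq> {}" using C0 by blast
  have le1: "Sup S \<le> lipnorm f" by (rule cSup_least[OF ne bound])
  have le2: "lipnorm f \<le> Sup S"
    unfolding lipnorm_def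
  proof (rule cSup_least)
    fix q assume "q \<in> insert 0 {norm (f x - f y) / norm (x - y) |x y. x \<noteq> y}"
    then show "q \<le> Sup S"
    proof
      assume "q = 0"
      then show ?thesis using cSup_upper[OF C0 bdd] norm_ge_zero by (metis order.trans)
    next
      assume "q \<in> {norm (f x - f y) / norm (x - y) |x y. x \<noteq> y}"
      then obtain x y where xy: "x \<noteq> y" "q = norm (f x - f y) / norm (x - y)" by blast
      define n where "n = norm (x - y)"
      have n: "n > 0" using xy unfolding n_def by simp
      define \<gamma> where "\<gamma> = (\<lambda>g::'a \<Rightarrow> 'b. (1/n) *\<^sub>R (delta x g - delta y g))"
      have gFY: "\<gamma> \<in> FY" unfolding \<gamma>_def by (intro FY_scale FY_diff delta_FY)
      have "qnorm (coset D \<gamma>) \<le> opnorm \<gamma>" by (rule qnorm_le[OF cs gFY coset_self[OF cs]])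
      also have "\<dots> \<le> \<bar>1/n\<bar> * opnorm (\<lambda>g::'a \<Rightarrow> 'b. delta x g - delta y g)"
        unfolding \<gamma>_def by (intro opnorm_scale BL_diff delta_BL)
      also have "\<dots> \<le> (1/n) * n"
        using opnorm_delta_diff[of x y] n unfolding n_def by (simp add: mult_left_mono)
      also have "\<dots> = 1" using n by simp
      finally have q1: "qnorm (coset D \<gamma>) \<le> 1" .
      have "Phi D f (coset D \<gamma>) = (1/n) *\<^sub>R (f x - f y)"
        using Phi_coset[OF cs f gFY] unfolding \<gamma>_def using delta_Lip0[OF fL] by simp
      then have "q = norm (Phi D f (coset D \<gamma>))" using xy n unfolding n_def by simp
      then have "q \<in> S" unfolding S_def using q1 coset_quot[OF gFY] by blast
      then show ?thesis by (rule cSup_upper[OF _ bdd])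
    qed
  qed simp
  show ?thesis unfolding qopnorm_def using le1 le2 unfolding S_def by simp
qed


lemma sum_span: "(\<lambda>g. \<Sum>i<(n::nat). c i *\<^sub>R delta (x i) g) \<in> span_delta"
  unfolding span_delta_def by blast

lemma eps_zero: assumes "\<And>e. e > 0 \<Longrightarrow> norm (z::'b::real_normed_vector) \<le> e" shows "z = 0"
proof (rule ccontr)
  assume "z \<noteq> 0"
  then have "norm z > 0" by simp
  then have "norm z \<le> norm z / 2" using assms[of "norm z / 2"] by simp
  then show False using \<open>norm z > 0\<close> by simp
qed

lemma Phi_surj:
  assumes cs: "closed_subspace_FY D" and T: "T \<in> BLQ D"
  shows "\<exists>f\<in>preannih D. Phi D f = T"
proof -
  obtain K where K: "\<forall>C\<in>quot D. norm (T C) \<le> K * qnorm C" using T unfolding BLQ_def by blast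
  have Tadd: "T (coset D (\<lambda>g. \<gamma> g + \<eta> g)) = T (coset D \<gamma>) + T (coset D \<eta>)" if "\<gamma> \<in> FY" "\<eta> \<in> FY" for \<gamma> \<eta>
    using T that unfolding BLQ_def by blast
  have Tscale: "T (coset D (\<lambda>g. c *\<^sub>R \<gamma> g)) = c *\<^sub>R T (coset D \<gamma>)" if "\<gamma> \<in> FY" for \<gamma> c
    using T that unfolding BLQ_def by blast
  have Toff: "T C = 0" if "C \<notin> quot D" for C
    using T that unfolding BLQ_def by blast
  have Tdiff: "T (coset D (\<lambda>g. \<gamma> g - \<eta> g)) = T (coset D \<gamma>) - T (coset D \<eta>)" if "\<gamma> \<in> FY" "\<eta> \<in> FY" for \<gamma> \<eta>
    using Tadd[OF that(1) FY_scale[OF that(2), of "-1"]] Tscale[OF that(2), of "-1"] by simp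
  have T0: "T (coset D (\<lambda>g. 0)) = 0"
    using Tscale[OF delta_FY, of 0 0] by simp
  have Tbound: "norm (T (coset D \<gamma>)) \<le> \<bar>K\<bar> * opnorm \<gamma>" if g: "\<gamma> \<in> FY" for \<gamma>
  proof -
    have q0: "0 \<le> qnorm (coset D \<gamma>)" by (rule qnorm_nonneg[OF cs g])
    have "norm (T (coset D \<gamma>)) \<le> K * qnorm (coset D \<gamma>)" using K coset_quot[OF g] by blast
    also have "\<dots> \<le> \<bar>K\<bar> * qnorm (coset D \<gamma>)" using q0 by (simp add: mult_right_mono)
    also have "\<dots> \<le> \<bar>K\<bar> * opnorm \<gamma>" using qnorm_le[OF cs g coset_self[OF cs]] by (simp add: mult_left_mono)
    finally show ?thesis .
  qed
  define f where "f x = T (coset D (delta x))" for x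
  have f0: "f 0 = 0" unfolding f_def delta_0 by (rule T0)
  have flip: "norm (f x - f y) \<le> \<bar>K\<bar> * norm (x - y)" for x y
  proof -
    have "f x - f y = T (coset D (\<lambda>g. delta x g - delta y g))"
      unfolding f_def by (rule Tdiff[OF delta_FY delta_FY, symmetric])
    also have "norm \<dots> \<le> \<bar>K\<bar> * opnorm (\<lambda>g::'a \<Rightarrow> 'b. delta x g - delta y g)"
      by (rule Tbound[OF FY_diff[OF delta_FY delta_FY]])
    also have "\<dots> \<le> \<bar>K\<bar> * norm (x - y)" by (simp add: mult_left_mono opnorm_delta_diff)
    finally show ?thesis .
  qed
  have fL: "f \<in> Lip0" unfolding Lip0_def using f0 flip by blast
  have Tsum: "T (coset D (\<lambda>g. \<Sum>i<(n::nat). c i *\<^sub>R delta (x i) g)) = (\<Sum>i<n. c i *\<^sub>R f (x i))" for n c x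
  proof (induction n)
    case 0 then show ?case using T0 by simp
  next
    case (Suc n)
    have "T (coset D (\<lambda>g. \<Sum>i<Suc n. c i *\<^sub>R delta (x i) g))
        = T (coset D (\<lambda>g. (\<lambda>g. \<Sum>i<n. c i *\<^sub>R delta (x i) g) g + (\<lambda>g. c n *\<^sub>R delta (x n) g) g))"
      by simp
    also have "\<dots> = T (coset D (\<lambda>g. \<Sum>i<n. c i *\<^sub>R delta (x i) g)) + T (coset D (\<lambda>g. c n *\<^sub>R delta (x n) g))"
      by (rule Tadd[OF span_FY[OF sum_span] FY_scale[OF delta_FY]])
    also have "\<dots> = (\<Sum>i<Suc n. c i *\<^sub>R f (x i))"
      using Suc Tscale[OF delta_FY] unfolding f_def by simp
    finally show ?case .
  qed
  have Tspan: "T (coset D \<eta>) = \<eta> f" if sp: "\<eta> \<in> span_delta" for \<eta>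
  proof -
    obtain n c x where e: "\<eta> = (\<lambda>g. \<Sum>i<(n::nat). c i *\<^sub>R delta (x i) g)"
      using sp unfolding span_delta_def by blast
    show ?thesis unfolding e Tsum using delta_Lip0[OF fL] by simp
  qed
  have main: "T (coset D \<gamma>) = \<gamma> f" if g: "\<gamma> \<in> FY" for \<gamma>
  proof -
    have "norm (T (coset D \<gamma>) - \<gamma> f) \<le> e" if e: "e > 0" for e
    proof -
      define M where "M = \<bar>K\<bar> + lipnorm f + 1"
      have M: "M > 0" unfolding M_def using lipnorm_nonneg[OF fL] by simp
      obtain \<eta> where eta: "\<eta> \<in> span_delta" "opnorm (\<lambda>g. \<gamma> g - \<eta> g) < e / M"
        using FY_approx[OF g, of "e/M"] e M by auto
      define \<delta> where "\<delta> = (\<lambda>g. \<gamma> g - \<eta> g)"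
      have dFY: "\<delta> \<in> FY" unfolding \<delta>_def by (rule FY_diff[OF g span_FY[OF eta(1)]])
      have "T (coset D \<delta>) = T (coset D \<gamma>) - \<eta> f"
        unfolding \<delta>_def Tdiff[OF g span_FY[OF eta(1)]] Tspan[OF eta(1)] ..
      then have eq: "T (coset D \<gamma>) - \<gamma> f = T (coset D \<delta>) - \<delta> f"
        unfolding \<delta>_def by simp
      have "norm (T (coset D \<gamma>) - \<gamma> f) \<le> norm (T (coset D \<delta>)) + norm (\<delta> f)"
        unfolding eq by (rule norm_triangle_ineq4)
      also have "\<dots> \<le> \<bar>K\<bar> * opnorm \<delta> + opnorm \<delta> * lipnorm f"
        by (intro add_mono Tbound[OF dFY] opnorm_bound[OF FY_BL[OF dFY] fL])
      also have "\<dots> \<le> M * opnorm \<delta>"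
        unfolding M_def using opnorm_nonneg[OF FY_BL[OF dFY]] by (simp add: algebra_simps)
      also have "\<dots> \<le> M * (e / M)"
        using eta(2) M unfolding \<delta>_def by (intro mult_left_mono) auto
      also have "\<dots> = e" using M by simp
      finally show ?thesis .
    qed
    then show ?thesis using eps_zero[of "T (coset D \<gamma>) - \<gamma> f"] by simp
  qed
  have fP: "f \<in> preannih D"
  proof -
    have "\<gamma> f = 0" if "\<gamma> \<in> D" for \<gamma>
    proof -
      have "\<gamma> f = T (coset D \<gamma>)" using main[OF cs_sub[OF cs that]] by simp
      also have "coset D \<gamma> = coset D (\<lambda>g. 0)"
        using coset_D[OF cs that] coset_D[OF cs cs_zero[OF cs]] by simp
      finally show ?thesis using T0 by simp
    qed
    then show ?thesis using fL unfolding preannih_def by blast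
  qed
  have "Phi D f = T"
  proof
    fix C show "Phi D f C = T C"
    proof (cases "C \<in> quot D")
      case True
      then obtain \<gamma> where gm: "\<gamma> \<in> FY" "C = coset D \<gamma>" using quot_obtain by blast
      then show ?thesis using Phi_coset[OF cs fP gm(1)] main[OF gm(1)] by simp
    next
      case False then show ?thesis using Toff by (simp add: Phi_def)
    qed
  qed
  then show ?thesis using fP by blast
qed

theorem mainTheorem14:
  fixes D :: "(('a::banach \<Rightarrow> 'b::banach) \<Rightarrow> 'b) set"
  assumes "closed_subspace_FY D"
  shows "bij_betw (Phi D) (preannih D) (BLQ D)
    \<and> (\<forall>f\<in>preannih D. \<forall>g\<in>preannih D.
          Phi D (\<lambda>x. f x + g x) = (\<lambda>C. Phi D f C + Phi D g C))
    \<and> (\<forall>f\<in>preannih D. \<forall>c. Phi D (\<lambda>x. c *\<^sub>R f x) = (\<lambda>C. c *\<^sub>R Phi D f C))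
    \<and> (\<forall>f\<in>preannih D. qopnorm D (Phi D f) = lipnorm f)"
proof (intro conjI ballI allI)
  show "bij_betw (Phi D) (preannih D) (BLQ D)"
    unfolding bij_betw_def
  proof
    show "inj_on (Phi D) (preannih D)" by (rule Phi_inj[OF assms])
    show "Phi D ` preannih D = BLQ D"
      using Phi_into[OF assms] Phi_surj[OF assms] by blast
  qed
qed (use Phi_add[OF assms] Phi_scale[OF assms] Phi_norm[OF assms] in auto)

end
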